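(* Let $A=(a_{nk})$ be an infinite complex matrix and $1<p<\infty$. (i) $A\in(c_0^\lambda(\widehat B):\ell_p)$ if and only if: (a) $\sup_{F\in\mathcal F}\sum_n\left|\sum_{k\in F}\widehat g_{nk}\right|^p<\infty$; (b) $\sum_{j=k}^\infty d_{jk}a_{nj}$ converges for all fixed $k,n\in\mathbb{N}$; (c) $\sup_{m\in\mathbb{N}}\sum_{k=0}^{m-1}|\widehat g_{nk}(m)|<\infty$ for each $n$; (d) $\sup_k\left|\frac1r\frac{\lambda_k}{\lambda_k-\lambda_{k-1}}a_{nk}\right|<\infty$ for each $n\in\mathbb{N}$. (ii) $A\in(c_0^\lambda(\widehat B):\ell_\infty)$ if and only if condition (c), condition (d), and $\sup_{n\in\mathbb{N}}\sum_k|\widehat g_{nk}|<\infty$ hold.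
   Context: Fix nonzero reals $r,s,t$ and a strictly increasing sequence $\lambda=(\lambda_k)_{k\ge0}$ of positive reals with $\lambda_k\to\infty$. Convention: terms with negative subscript are $0$. $\omega$: all complex sequences indexed by $\mathbb{N}=\{0,1,\dots\}$; $\mathcal F$: finite subsets of $\mathbb{N}$. $D=(d_{nk})$ is the inverse of the lower triangular matrix $B(r,s,t)$ having $r$ on the diagonal, $s$ on the first subdiagonal, $t$ on the second subdiagonal and zeros elsewhere; explicitly $d_{nk}=\frac1r\sum_{v=0}^{n-k}\rho_1^{\,n-k-v}\rho_2^{\,v}$ ($0\le k\le n$), $d_{nk}=0$ ($k>n$), $\rho_{1,2}=\frac{-s\pm\sqrt{s^2-4tr}}{2r}$. With $\widehat W_n(x)=\frac{1}{\lambda_n}\sum_{k=0}^n(\lambda_k-\lambda_{k-1})(rx_k+sx_{k-1}+tx_{k-2})$, $c_0^\lambda(\widehat B)=\{x\in\omega:(\widehat W_n(x))_n\in c_0\}$. For $k<m$, $\widehat g_{nk}(m)=\lambda_k\left(\frac{1}{\lambda_k-\lambda_{k-1}}\sum_{j=k}^m d_{jk}a_{nj}-\frac{1}{\lambda_{k+1}-\lambda_k}\sum_{j=k+1}^m d_{j,k+1}a_{nj}\right)$, and $\widehat g_{nk}$ is the same with sums to $\infty$ (provided convergence). $A\in(X:Y)$ means that for every $x\in X$ the series $(Ax)_n=\sum_k a_{nk}x_k$ converges for each $n$ and $Ax\in Y$. *)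

theory Defs
  imports Complex_Main
begin

text \<open>Convention: terms with negative subscript are 0.\<close>
definition lam_prev :: "(nat \<Rightarrow> real) \<Rightarrow> nat \<Rightarrow> real" where
  "lam_prev lam k = (if k = 0 then 0 else lam (k - 1))"

definition seq_back :: "(nat \<Rightarrow> complex) \<Rightarrow> nat \<Rightarrow> nat \<Rightarrow> complex" where
  "seq_back x i k = (if k < i then 0 else x (k - i))"

definition rho1 :: "real \<Rightarrow> real \<Rightarrow> real \<Rightarrow> complex" where
  "rho1 r s t = (- of_real s + csqrt (of_real (s^2 - 4*t*r))) / (2 * of_real r)"

definition rho2 :: "real \<Rightarrow> real \<Rightarrow> real \<Rightarrow> complex" where
  "rho2 r s t = (- of_real s - csqrt (of_real (s^2 - 4*t*r))) / (2 * of_real r)"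

text \<open>Entries of D = B(r,s,t)^{-1}.\<close>
definition dmat :: "real \<Rightarrow> real \<Rightarrow> real \<Rightarrow> nat \<Rightarrow> nat \<Rightarrow> complex" where
  "dmat r s t n k = (if k \<le> n then (1 / of_real r) *
      (\<Sum>v = 0..n - k. rho1 r s t ^ (n - k - v) * rho2 r s t ^ v) else 0)"

definition What :: "real \<Rightarrow> real \<Rightarrow> real \<Rightarrow> (nat \<Rightarrow> real) \<Rightarrow> (nat \<Rightarrow> complex) \<Rightarrow> nat \<Rightarrow> complex" where
  "What r s t lam x n = (1 / of_real (lam n)) *
     (\<Sum>k = 0..n. of_real (lam k - lam_prev lam k) *
        (of_real r * x k + of_real s * seq_back x 1 k + of_real t * seq_back x 2 k))"

definition c0_lam_B :: "real \<Rightarrow> real \<Rightarrow> real \<Rightarrow> (nat \<Rightarrow> real) \<Rightarrow> (nat \<Rightarrow> complex) set" where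
  "c0_lam_B r s t lam = {x. (\<lambda>n. What r s t lam x n) \<longlonglongrightarrow> 0}"

text \<open>\<open>g_{nk}(m)\<close> (meaningful for k < m).\<close>
definition ghat_m :: "real \<Rightarrow> real \<Rightarrow> real \<Rightarrow> (nat \<Rightarrow> real) \<Rightarrow> (nat \<Rightarrow> nat \<Rightarrow> complex)
    \<Rightarrow> nat \<Rightarrow> nat \<Rightarrow> nat \<Rightarrow> complex" where
  "ghat_m r s t lam a n k m = of_real (lam k) *
     ((1 / of_real (lam k - lam_prev lam k)) * (\<Sum>j = k..m. dmat r s t j k * a n j)
      - (1 / of_real (lam (Suc k) - lam k)) * (\<Sum>j = Suc k..m. dmat r s t j (Suc k) * a n j))"

definition ghat :: "real \<Rightarrow> real \<Rightarrow> real \<Rightarrow> (nat \<Rightarrow> real) \<Rightarrow> (nat \<Rightarrow> nat \<Rightarrow> complex)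
    \<Rightarrow> nat \<Rightarrow> nat \<Rightarrow> complex" where
  "ghat r s t lam a n k = of_real (lam k) *
     ((1 / of_real (lam k - lam_prev lam k)) * (\<Sum>i. dmat r s t (i + k) k * a n (i + k))
      - (1 / of_real (lam (Suc k) - lam k)) *
          (\<Sum>i. dmat r s t (i + Suc k) (Suc k) * a n (i + Suc k)))"

definition matrix_class :: "(nat \<Rightarrow> nat \<Rightarrow> complex) \<Rightarrow> (nat \<Rightarrow> complex) set \<Rightarrow> (nat \<Rightarrow> complex) set \<Rightarrow> bool" where
  "matrix_class a X Y \<longleftrightarrow> (\<forall>x\<in>X. (\<forall>n. summable (\<lambda>k. a n k * x k)) \<and> (\<lambda>n. \<Sum>k. a n k * x k) \<in> Y)"

definition ell_p :: "real \<Rightarrow> (nat \<Rightarrow> complex) set" where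
  "ell_p p = {y. summable (\<lambda>n. norm (y n) powr p)}"

definition ell_inf :: "(nat \<Rightarrow> complex) set" where
  "ell_inf = {y. bdd_above (range (\<lambda>n. norm (y n)))}"

end

theory Submission
  imports Defs "HOL-Analysis.Analysis"
begin

lemma V_closed: "closed {f::nat \<Rightarrow>\<^sub>C complex. (\<lambda>k. apply_bcontfun f k) \<longlonglongrightarrow> 0}"
proof (rule closed_sequential_limits[THEN iffD2], intro allI impI, elim conjE)
  fix x :: "nat \<Rightarrow> nat \<Rightarrow>\<^sub>C complex" and l
  assume x: "\<forall>n. x n \<in> {f. (\<lambda>k. apply_bcontfun f k) \<longlonglongrightarrow> 0}" and l: "x \<longlonglongrightarrow> l"
  show "l \<in> {f. (\<lambda>k. apply_bcontfun f k) \<longlonglongrightarrow> 0}"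
  proof (simp, rule LIMSEQ_I)
    fix e :: real assume e: "0 < e"
    obtain n where n: "dist (x n) l < e/2" using metric_LIMSEQ_D[OF l, of "e/2"] e
      by auto
    have "(\<lambda>k. apply_bcontfun (x n) k) \<longlonglongrightarrow> 0" using x by auto
    then obtain K where K: "\<And>k. k \<ge> K \<Longrightarrow> norm (apply_bcontfun (x n) k) < e/2"
      using LIMSEQ_D[of _ 0 "e/2"] e by fastforce
    show "\<exists>K. \<forall>k\<ge>K. norm (apply_bcontfun l k - 0) < e"
    proof (intro exI allI impI)
      fix k assume "k \<ge> K"
      have "dist (apply_bcontfun (x n) k) (apply_bcontfun l k) \<le> dist (x n) l"
        by (rule dist_bounded)
      hence "norm (apply_bcontfun l k) \<le> norm (apply_bcontfun (x n) k) + dist (x n) l"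
        by (metis dist_norm norm_minus_commute norm_triangle_sub order_trans add_left_mono)
      thus "norm (apply_bcontfun l k - 0) < e" using K[OF \<open>k\<ge>K\<close>] n by simp
    qed
  qed
qed

lemma complete_bc: "complete (UNIV :: (nat \<Rightarrow>\<^sub>C complex) set)"
  unfolding complete_def
proof (intro allI impI, elim conjE)
  fix f :: "nat \<Rightarrow> (nat \<Rightarrow>\<^sub>C complex)"
  assume "Cauchy f"
  then obtain g where g: "uniform_limit UNIV f g sequentially"
    using uniformly_convergent_eq_cauchy[of "\<lambda>_. True" f]
    unfolding Cauchy_def uniform_limit_sequentially_iff
    by (metis dist_fun_lt_imp_dist_val_lt)
  have "bounded (range g)"
    by (rule uniform_limit_bounded[OF g]) (auto intro!: always_eventually bounded_apply_bcontfun)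
  hence gb: "g \<in> bcontfun" by (simp add: bcontfun_def)
  have "f \<longlonglongrightarrow> Bcontfun g"
    by (rule uniform_limit_tendsto_bcontfun) (use g Bcontfun_inverse[OF gb] in simp)
  thus "\<exists>l\<in>UNIV. f \<longlonglongrightarrow> l" by blast
qed

lemma cms_bc: "completely_metrizable_space (euclidean :: (nat \<Rightarrow>\<^sub>C complex) topology)"
  using Met_TC.completely_metrizable_space_mtopology complete_bc by auto

lemma UB_gen:
  fixes \<Phi> :: "'i \<Rightarrow> (nat \<Rightarrow>\<^sub>C complex) \<Rightarrow> real" and Cc p :: real
  defines "V \<equiv> {f::nat \<Rightarrow>\<^sub>C complex. (\<lambda>k. apply_bcontfun f k) \<longlonglongrightarrow> 0}"
  assumes cont: "\<And>i. continuous_on V (\<Phi> i)"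
  and Cc: "Cc \<ge> 0"
  and sub: "\<And>i f g. f\<in>V \<Longrightarrow> g\<in>V \<Longrightarrow> \<Phi> i (f + g) \<le> Cc * (\<Phi> i f + \<Phi> i g)"
  and neg: "\<And>i f. f\<in>V \<Longrightarrow> \<Phi> i (-f) = \<Phi> i f"
  and hom: "\<And>i f c. f\<in>V \<Longrightarrow> c > 0 \<Longrightarrow> \<Phi> i (c *\<^sub>R f) = c powr p * \<Phi> i f"
  and bdd: "\<And>f. f\<in>V \<Longrightarrow> bdd_above (range (\<lambda>i. \<Phi> i f))"
  shows "\<exists>B. \<forall>i f. f\<in>V \<longrightarrow> norm f \<le> 1 \<longrightarrow> \<Phi> i f \<le> B"
proof -
  have Vc: "closed V" unfolding V_def by (rule V_closed)
  have V0: "0 \<in> V" by (simp add: V_def)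
  have Vadd: "f + g \<in> V" if "f \<in> V" "g \<in> V" for f g
    using that by (auto simp: V_def intro: tendsto_add_zero)
  have Vneg: "- f \<in> V" if "f \<in> V" for f
    using that tendsto_minus[of "\<lambda>k. apply_bcontfun f k" 0] by (auto simp: V_def)
  have Vscale: "c *\<^sub>R f \<in> V" if "f \<in> V" for f c
    using that tendsto_scaleR[of "\<lambda>_. c" c sequentially "\<lambda>k. apply_bcontfun f k" 0] by (auto simp: V_def)
  define T where "T M = {f\<in>V. \<forall>i. \<Phi> i f \<le> real M}" for M :: nat
  have Tcl: "closedin (top_of_set V) (T M)" for M
  proof -
    have "T M = \<Inter>(insert V (range (\<lambda>i. V \<inter> \<Phi> i -` {..real M})))"
      by (auto simp: T_def)
    also have "closedin (top_of_set V) \<dots>"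
      by (rule closedin_Inter) (auto intro!: continuous_closedin_preimage cont)
    finally show ?thesis .
  qed
  have Tun: "\<Union>(range T) = V"
  proof
    show "\<Union>(range T) \<subseteq> V" by (auto simp: T_def)
    show "V \<subseteq> \<Union>(range T)"
    proof
      fix f assume f: "f \<in> V"
      obtain b where b: "\<And>i. \<Phi> i f \<le> b" using bdd[OF f] by (auto simp: bdd_above_def)
      obtain M :: nat where "b \<le> real M" using real_arch_simple by blast
      hence "f \<in> T M" using b f by (auto simp: T_def intro: order_trans)
      thus "f \<in> \<Union>(range T)" by blast
    qed
  qed
  have cms: "completely_metrizable_space (top_of_set V)"
  proof -
    have "closedin euclidean V" using Vc closed_closedin by blast
    from completely_metrizable_space_closedin[OF cms_bc this] show ?thesis .
  qed
  have "\<exists>M. (top_of_set V) interior_of (T M) \<noteq> {}"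
  proof (rule ccontr)
    assume "\<not> ?thesis"
    hence "(top_of_set V) interior_of \<Union>(range T) = {}"
      apply (intro Baire_category_alt)
      subgoal using cms by blast
      subgoal by simp
      subgoal for S using Tcl by blast
      done
    thus False using Tun V0 interior_of_topspace[of "top_of_set V"] by simp
  qed
  then obtain M f0 where f0: "f0 \<in> (top_of_set V) interior_of (T M)" by blast
  have "openin (top_of_set V) ((top_of_set V) interior_of (T M))" by simp
  then obtain e where e: "e > 0" "ball f0 e \<inter> V \<subseteq> (top_of_set V) interior_of (T M)"
    using f0 unfolding openin_contains_ball by blast
  have isub: "(top_of_set V) interior_of (T M) \<subseteq> T M" by (rule interior_of_subset)
  have f0T: "f0 \<in> T M" using f0 isub by (rule subsetD[rotated])
  hence f0V: "f0 \<in> V" by (simp add: T_def)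
  show ?thesis
  proof (intro exI allI impI)
    fix i f assume fV: "f \<in> V" and fn: "norm f \<le> 1"
    define u where "u = (e/2) *\<^sub>R f"
    have uV: "u \<in> V" unfolding u_def by (rule Vscale[OF fV])
    have "norm u \<le> e/2" using fn e by (simp add: u_def)
    hence "dist (f0 + u) f0 < e" using e by (simp add: dist_norm)
    hence "f0 + u \<in> ball f0 e \<inter> V" using Vadd[OF f0V uV] by (simp add: dist_commute)
    hence "f0 + u \<in> T M" using e(2) isub by blast
    hence a1: "\<Phi> i (f0 + u) \<le> M" by (simp add: T_def)
    have a2: "\<Phi> i f0 \<le> M" using f0T by (simp add: T_def)
    have "\<Phi> i u = \<Phi> i ((f0 + u) + (- f0))" by simp
    also have "\<dots> \<le> Cc * (\<Phi> i (f0 + u) + \<Phi> i (- f0))"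
      by (rule sub) (auto intro: Vadd Vneg f0V uV)
    also have "\<dots> = Cc * (\<Phi> i (f0 + u) + \<Phi> i f0)" using neg[OF f0V] by simp
    also have "\<dots> \<le> Cc * (2 * M)" using a1 a2 Cc by (intro mult_left_mono) auto
    finally have "\<Phi> i u \<le> Cc * (2 * M)" .
    moreover have "\<Phi> i u = (e/2) powr p * \<Phi> i f" unfolding u_def using e fV by (intro hom) auto
    ultimately have "(e/2) powr p * \<Phi> i f \<le> Cc * (2 * M)" by simp
    moreover have "(e/2) powr p > 0" using e by simp
    ultimately show "\<Phi> i f \<le> Cc * (2 * M) / (e/2) powr p"
      by (simp add: field_simps)
  qed
qed

definition Lf :: "(nat \<Rightarrow> complex) \<Rightarrow> (nat \<Rightarrow>\<^sub>C complex) \<Rightarrow> complex" where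
  "Lf h f = (\<Sum>k. h k * apply_bcontfun f k)"

lemma Lf_summable:
  fixes h :: "nat \<Rightarrow> complex" and f :: "nat \<Rightarrow>\<^sub>C complex"
  assumes "summable (\<lambda>k. norm (h k))"
  shows "summable (\<lambda>k. norm (h k * apply_bcontfun f k))"
proof (rule summable_comparison_test[OF _ summable_mult2[OF assms, of "norm f"]])
  show "\<exists>N. \<forall>n\<ge>N. norm (norm (h n * apply_bcontfun f n)) \<le> norm (h n) * norm f"
  proof -
    have "norm (h n * apply_bcontfun f n) \<le> norm (h n) * norm f" for n
      unfolding norm_mult by (rule mult_left_mono[OF norm_bounded]) simp
    thus ?thesis by simp
  qed
qed

lemma Lf_bound:
  fixes h :: "nat \<Rightarrow> complex" and f :: "nat \<Rightarrow>\<^sub>C complex"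
  assumes "summable (\<lambda>k. norm (h k))"
  shows "norm (Lf h f) \<le> (\<Sum>k. norm (h k)) * norm f"
proof -
  have "norm (Lf h f) \<le> (\<Sum>k. norm (h k * apply_bcontfun f k))"
    unfolding Lf_def by (rule summable_norm[OF Lf_summable[OF assms]])
  also have "\<dots> \<le> (\<Sum>k. norm (h k) * norm f)"
  proof (rule suminf_le)
    show "norm (h k * apply_bcontfun f k) \<le> norm (h k) * norm f" for k
      unfolding norm_mult by (rule mult_left_mono[OF norm_bounded]) simp
    show "summable (\<lambda>k. norm (h k * apply_bcontfun f k))" by (rule Lf_summable[OF assms])
    show "summable (\<lambda>k. norm (h k) * norm f)" by (rule summable_mult2[OF assms])
  qed
  also have "\<dots> = (\<Sum>k. norm (h k)) * norm f" by (rule suminf_mult2[OF assms, symmetric])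
  finally show ?thesis .
qed

lemma Lf_add:
  assumes "summable (\<lambda>k. norm (h k))"
  shows "Lf h (f + g) = Lf h f + Lf h g"
proof -
  have "Lf h (f + g) = (\<Sum>k. h k * apply_bcontfun f k + h k * apply_bcontfun g k)"
    by (simp add: Lf_def distrib_left)
  also have "\<dots> = Lf h f + Lf h g" unfolding Lf_def
    by (rule suminf_add[symmetric]; rule summable_norm_cancel[OF Lf_summable[OF assms]])
  finally show ?thesis .
qed

lemma Lf_scale:
  assumes "summable (\<lambda>k. norm (h k))"
  shows "Lf h (c *\<^sub>R f) = of_real c * Lf h f"
proof -
  have "Lf h (c *\<^sub>R f) = (\<Sum>k. of_real c * (h k * apply_bcontfun f k))"
    by (simp add: Lf_def scaleR_conv_of_real mult.left_commute)
  also have "\<dots> = of_real c * Lf h f" unfolding Lf_def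
    by (rule suminf_mult; rule summable_norm_cancel[OF Lf_summable[OF assms]])
  finally show ?thesis .
qed

lemma Lf_neg:
  assumes "summable (\<lambda>k. norm (h k))"
  shows "Lf h (- f) = - Lf h f"
  using Lf_scale[OF assms, of "-1" f] by simp

lemma Lf_cont:
  assumes "summable (\<lambda>k. norm (h k))"
  shows "continuous_on S (Lf h)"
proof -
  have "(\<Sum>k. norm (h k))-lipschitz_on S (Lf h)"
  proof (rule lipschitz_onI)
    fix x y
    have "Lf h x - Lf h y = Lf h (x - y)"
      using Lf_add[OF assms, of "x - y" y] by simp
    hence "dist (Lf h x) (Lf h y) = norm (Lf h (x - y))" by (simp add: dist_norm)
    also have "\<dots> \<le> (\<Sum>k. norm (h k)) * dist x y" using Lf_bound[OF assms] by (simp add: dist_norm)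
    finally show "dist (Lf h x) (Lf h y) \<le> (\<Sum>k. norm (h k)) * dist x y" .
    show "0 \<le> (\<Sum>k. norm (h k))" by (intro suminf_nonneg assms) auto
  qed
  thus ?thesis by (rule lipschitz_on_continuous_on)
qed

lemma bc_of_c0: "(y::nat \<Rightarrow> complex) \<longlonglongrightarrow> 0 \<Longrightarrow> y \<in> bcontfun"
proof -
  assume "y \<longlonglongrightarrow> 0"
  hence "bounded (range y)" by (rule convergent_imp_bounded)
  thus ?thesis unfolding bcontfun_def by (simp add: Topological_Spaces.continuous_on_discrete)
qed

lemma bc_of_bounded: "(\<And>k. norm ((y::nat \<Rightarrow> complex) k) \<le> 1) \<Longrightarrow> y \<in> bcontfun"
  by (rule bcontfun_normI[OF Topological_Spaces.continuous_on_discrete])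

lemma UB1:
  fixes h :: "'i \<Rightarrow> nat \<Rightarrow> complex"
  assumes hs: "\<And>i. summable (\<lambda>k. norm (h i k))"
  and bd: "\<And>y. y \<longlonglongrightarrow> 0 \<Longrightarrow> bdd_above (range (\<lambda>i. norm (\<Sum>k. h i k * y k)))"
  shows "\<exists>B. \<forall>i. (\<Sum>k. norm (h i k)) \<le> B"
proof -
  define V where "V = {f::nat \<Rightarrow>\<^sub>C complex. (\<lambda>k. apply_bcontfun f k) \<longlonglongrightarrow> 0}"
  have "\<exists>B. \<forall>i f. f\<in>V \<longrightarrow> norm f \<le> 1 \<longrightarrow> norm (Lf (h i) f) \<le> B"
    unfolding V_def
  proof (rule UB_gen[where Cc=1 and p=1])
    show "continuous_on {f. (\<lambda>k. apply_bcontfun f k) \<longlonglongrightarrow> 0} (\<lambda>f. norm (Lf (h i) f))" for i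
      by (intro continuous_on_norm Lf_cont hs)
    show "norm (Lf (h i) (f + g)) \<le> 1 * (norm (Lf (h i) f) + norm (Lf (h i) g))" for i f g
      by (simp add: Lf_add[OF hs] norm_triangle_ineq)
    show "norm (Lf (h i) (- f)) = norm (Lf (h i) f)" for i f by (simp add: Lf_neg[OF hs])
    show "norm (Lf (h i) (c *\<^sub>R f)) = c powr 1 * norm (Lf (h i) f)" if "c > 0" for i f c
      using that by (simp add: Lf_scale[OF hs] norm_mult)
    show "bdd_above (range (\<lambda>i. norm (Lf (h i) f)))"
      if "f \<in> {f. (\<lambda>k. apply_bcontfun f k) \<longlonglongrightarrow> 0}" for f
      using bd[of "apply_bcontfun f"] that by (simp add: Lf_def)
  qed simp
  then obtain B where B: "\<And>i f. f\<in>V \<Longrightarrow> norm f \<le> 1 \<Longrightarrow> norm (Lf (h i) f) \<le> B" by blast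
  have "(\<Sum>k. norm (h i k)) \<le> B" for i
  proof (rule suminf_le_const[OF hs])
    fix K
    define y where "y k = (if k < K \<and> h i k \<noteq> 0 then cnj (h i k) / of_real (norm (h i k)) else 0)" for k
    have yn: "norm (y k) \<le> 1" for k by (simp add: y_def norm_divide)
    have y0: "y \<longlonglongrightarrow> 0"
      by (rule tendsto_eventually) (auto simp: y_def eventually_at_top_linorder intro!: exI[of _ K])
    define f where "f = Bcontfun y"
    have fy: "apply_bcontfun f = y" unfolding f_def by (rule Bcontfun_inverse[OF bc_of_bounded[OF yn]])
    have fV: "f \<in> V" using y0 by (simp add: V_def fy)
    have fn: "norm f \<le> 1" by (rule norm_bound) (simp add: fy yn)
    have "Lf (h i) f = (\<Sum>k. h i k * y k)" by (simp add: Lf_def fy)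
    also have "\<dots> = (\<Sum>k<K. h i k * y k)"
      by (rule suminf_finite) (auto simp: y_def)
    also have "\<dots> = (\<Sum>k<K. of_real (norm (h i k)))"
    proof (rule sum.cong[OF refl])
      fix k assume "k \<in> {..<K}"
      show "h i k * y k = of_real (norm (h i k))"
      proof (cases "h i k = 0")
        case True thus ?thesis by (simp add: y_def)
      next
        case False
        have "h i k * y k = (h i k * cnj (h i k)) / of_real (norm (h i k))"
          using \<open>k \<in> {..<K}\<close> False by (simp add: y_def)
        also have "\<dots> = (of_real (norm (h i k)))^2 / of_real (norm (h i k))"
          by (simp add: complex_norm_square[symmetric])
        also have "\<dots> = of_real (norm (h i k))" using False by (simp add: power2_eq_square)
        finally show ?thesis .
      qed
    qed
    finally have "norm (Lf (h i) f) = (\<Sum>k<K. norm (h i k))"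
      by (simp add: of_real_sum[symmetric] del: of_real_sum) (simp add: sum_nonneg)
    thus "(\<Sum>k<K. norm (h i k)) \<le> B" using B[of f i] fV fn by simp
  qed
  thus ?thesis by blast
qed

lemma powr_add_le:
  fixes a b p :: real
  assumes "a \<ge> 0" "b \<ge> 0" "p > 0"
  shows "(a + b) powr p \<le> 2 powr p * (a powr p + b powr p)"
proof -
  have "(a + b) powr p \<le> (2 * max a b) powr p"
    using assms by (intro powr_mono2) auto
  also have "\<dots> = 2 powr p * max a b powr p" by (rule powr_mult)
  also have "max a b powr p \<le> a powr p + b powr p"
    by (cases "a \<le> b") (auto simp: max_def)
  hence "2 powr p * max a b powr p \<le> 2 powr p * (a powr p + b powr p)"
    by (intro mult_left_mono) auto
  finally show ?thesis .
qed

lemma UBp: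
  fixes g :: "nat \<Rightarrow> nat \<Rightarrow> complex" and p :: real
  assumes p: "p > 0" and gs: "\<And>n. summable (\<lambda>k. norm (g n k))"
  and sm: "\<And>y. y \<longlonglongrightarrow> 0 \<Longrightarrow> summable (\<lambda>n. norm (\<Sum>k. g n k * y k) powr p)"
  shows "\<exists>B. \<forall>F. finite F \<longrightarrow> summable (\<lambda>n. norm (\<Sum>k\<in>F. g n k) powr p) \<and>
            (\<Sum>n. norm (\<Sum>k\<in>F. g n k) powr p) \<le> B"
proof -
  define V where "V = {f::nat \<Rightarrow>\<^sub>C complex. (\<lambda>k. apply_bcontfun f k) \<longlonglongrightarrow> 0}"
  define \<Phi> where "\<Phi> N f = (\<Sum>n<N. norm (Lf (g n) f) powr p)" for N f
  have "\<exists>B. \<forall>i f. f\<in>V \<longrightarrow> norm f \<le> 1 \<longrightarrow> \<Phi> i f \<le> B"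
    unfolding V_def
  proof (rule UB_gen[where Cc="2 powr p" and p=p])
    show "continuous_on {f. (\<lambda>k. apply_bcontfun f k) \<longlonglongrightarrow> 0} (\<Phi> i)" for i
      unfolding \<Phi>_def
      by (intro continuous_on_sum continuous_on_powr' continuous_on_norm Lf_cont gs continuous_on_const)
         (use p in auto)
    show "\<Phi> i (f + h) \<le> 2 powr p * (\<Phi> i f + \<Phi> i h)" for i f h
    proof -
      have "\<Phi> i (f + h) \<le> (\<Sum>n<i. 2 powr p * (norm (Lf (g n) f) powr p + norm (Lf (g n) h) powr p))"
        unfolding \<Phi>_def
      proof (rule sum_mono)
        fix n
        have "norm (Lf (g n) (f + h)) powr p \<le> (norm (Lf (g n) f) + norm (Lf (g n) h)) powr p"
          using p by (intro powr_mono2) (auto simp: Lf_add[OF gs] norm_triangle_ineq)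
        also have "\<dots> \<le> 2 powr p * (norm (Lf (g n) f) powr p + norm (Lf (g n) h) powr p)"
          by (rule powr_add_le) (use p in auto)
        finally show "norm (Lf (g n) (f + h)) powr p \<le> 2 powr p * (norm (Lf (g n) f) powr p + norm (Lf (g n) h) powr p)" .
      qed
      also have "\<dots> = 2 powr p * (\<Phi> i f + \<Phi> i h)"
        by (simp add: \<Phi>_def sum_distrib_left[symmetric] sum.distrib)
      finally show ?thesis .
    qed
    show "\<Phi> i (- f) = \<Phi> i f" for i f by (simp add: \<Phi>_def Lf_neg[OF gs])
    show "\<Phi> i (c *\<^sub>R f) = c powr p * \<Phi> i f" if "c > 0" for i f c
      using that by (simp add: \<Phi>_def Lf_scale[OF gs] norm_mult powr_mult sum_distrib_left)
    show "bdd_above (range (\<lambda>i. \<Phi> i f))"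
      if "f \<in> {f. (\<lambda>k. apply_bcontfun f k) \<longlonglongrightarrow> 0}" for f
    proof -
      have s: "summable (\<lambda>n. norm (Lf (g n) f) powr p)"
        using sm[of "apply_bcontfun f"] that by (simp add: Lf_def)
      have "\<Phi> i f \<le> (\<Sum>n. norm (Lf (g n) f) powr p)" for i
        unfolding \<Phi>_def by (rule sum_le_suminf[OF s]) auto
      thus ?thesis by (auto simp: bdd_above_def)
    qed
  qed (use p in auto)
  then obtain B where B: "\<And>i f. f\<in>V \<Longrightarrow> norm f \<le> 1 \<Longrightarrow> \<Phi> i f \<le> B" by blast
  have "summable (\<lambda>n. norm (\<Sum>k\<in>F. g n k) powr p) \<and> (\<Sum>n. norm (\<Sum>k\<in>F. g n k) powr p) \<le> B"
    if F: "finite F" for F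
  proof -
    define y where "y k = (if k \<in> F then 1 else 0 :: complex)" for k
    have yn: "norm (y k) \<le> 1" for k by (simp add: y_def)
    obtain K where K: "\<And>k. k \<in> F \<Longrightarrow> k < K"
      using F finite_nat_bounded by blast
    have y0: "y \<longlonglongrightarrow> 0"
      by (rule tendsto_eventually) (auto simp: y_def eventually_at_top_linorder intro!: exI[of _ K] dest: K)
    define f where "f = Bcontfun y"
    have fy: "apply_bcontfun f = y" unfolding f_def by (rule Bcontfun_inverse[OF bc_of_bounded[OF yn]])
    have fV: "f \<in> V" using y0 by (simp add: V_def fy)
    have fn: "norm f \<le> 1" by (rule norm_bound) (simp add: fy yn)
    have L: "Lf (g n) f = (\<Sum>k\<in>F. g n k)" for n
    proof -
      have "Lf (g n) f = (\<Sum>k. g n k * y k)" by (simp add: Lf_def fy)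
      also have "\<dots> = (\<Sum>k\<in>F. g n k * y k)" by (rule suminf_finite[OF F]) (auto simp: y_def)
      also have "\<dots> = (\<Sum>k\<in>F. g n k)" by (rule sum.cong) (auto simp: y_def)
      finally show ?thesis .
    qed
    have bd: "(\<Sum>n<N. norm (\<Sum>k\<in>F. g n k) powr p) \<le> B" for N
      using B[of f N] fV fn by (simp add: \<Phi>_def L)
    have s: "summable (\<lambda>n. norm (\<Sum>k\<in>F. g n k) powr p)"
      by (rule summableI_nonneg_bounded[OF _ bd]) simp
    show ?thesis using s suminf_le_const[OF s bd] by simp
  qed
  thus ?thesis by blast
qed

lemma c0c_nec:
  fixes E :: "nat \<Rightarrow> nat \<Rightarrow> complex"
  assumes conv: "\<And>y. y \<longlonglongrightarrow> 0 \<Longrightarrow> convergent (\<lambda>m. \<Sum>k\<le>m. E m k * y k)"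
  shows "\<exists>M. \<forall>m. (\<Sum>k\<le>m. norm (E m k)) \<le> M"
proof -
  define h where "h m k = (if k \<le> m then E m k else 0)" for m k
  have fin: "(\<Sum>k. h m k * y k) = (\<Sum>k\<le>m. E m k * y k)" for m y
  proof -
    have "(\<Sum>k. h m k * y k) = (\<Sum>k\<le>m. h m k * y k)" by (rule suminf_finite) (auto simp: h_def)
    also have "\<dots> = (\<Sum>k\<le>m. E m k * y k)" by (rule sum.cong) (auto simp: h_def)
    finally show ?thesis .
  qed
  have finn: "(\<Sum>k. norm (h m k)) = (\<Sum>k\<le>m. norm (E m k))" for m
  proof -
    have "(\<Sum>k. norm (h m k)) = (\<Sum>k\<le>m. norm (h m k))" by (rule suminf_finite) (auto simp: h_def)
    also have "\<dots> = (\<Sum>k\<le>m. norm (E m k))" by (rule sum.cong) (auto simp: h_def)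
    finally show ?thesis .
  qed
  have hs: "summable (\<lambda>k. norm (h m k))" for m
    by (rule summable_finite[of "{..m}"]) (auto simp: h_def)
  have "\<exists>B. \<forall>m. (\<Sum>k. norm (h m k)) \<le> B"
  proof (rule UB1[OF hs])
    fix y :: "nat \<Rightarrow> complex" assume "y \<longlonglongrightarrow> 0"
    hence "Bseq (\<lambda>m. \<Sum>k\<le>m. E m k * y k)" by (intro convergent_imp_Bseq conv)
    then obtain K where "\<And>m. norm (\<Sum>k\<le>m. E m k * y k) \<le> K" by (auto simp: Bseq_def)
    thus "bdd_above (range (\<lambda>m. norm (\<Sum>k. h m k * y k)))"
      by (auto simp: fin bdd_above_def)
  qed
  thus ?thesis by (simp add: finn)
qed

lemma c0c_suff:
  fixes E :: "nat \<Rightarrow> nat \<Rightarrow> complex" and g :: "nat \<Rightarrow> complex" and M :: real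
  assumes col: "\<And>k. (\<lambda>m. E m k) \<longlonglongrightarrow> g k"
  and bnd: "\<And>m. (\<Sum>k\<le>m. norm (E m k)) \<le> M"
  shows "summable (\<lambda>k. norm (g k))" and "(\<Sum>k. norm (g k)) \<le> M"
    and "\<And>y. y \<longlonglongrightarrow> 0 \<Longrightarrow> (\<lambda>m. \<Sum>k\<le>m. E m k * y k) \<longlonglongrightarrow> (\<Sum>k. g k * y k)"
proof -
  have pre: "(\<Sum>k<K. norm (g k)) \<le> M" for K
  proof (rule tendsto_le[OF trivial_limit_sequentially])
    show "(\<lambda>m. \<Sum>k<K. norm (E m k)) \<longlonglongrightarrow> (\<Sum>k<K. norm (g k))"
      by (intro tendsto_sum tendsto_norm col)
    show "\<forall>\<^sub>F m in sequentially. (\<Sum>k<K. norm (E m k)) \<le> M"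
    proof (rule eventually_sequentiallyI[of K])
      fix m assume "K \<le> m"
      have "(\<Sum>k<K. norm (E m k)) \<le> (\<Sum>k\<le>m. norm (E m k))"
        by (rule sum_mono2) (use \<open>K \<le> m\<close> in auto)
      thus "(\<Sum>k<K. norm (E m k)) \<le> M" using bnd[of m] by simp
    qed
    show "(\<lambda>m. M) \<longlonglongrightarrow> M" by simp
  qed
  show gs: "summable (\<lambda>k. norm (g k))" by (rule summableI_nonneg_bounded[OF _ pre]) simp
  show gM: "(\<Sum>k. norm (g k)) \<le> M" by (rule suminf_le_const[OF gs pre])
  have M0: "M \<ge> 0" using bnd[of 0] by (meson norm_ge_zero order_trans sum_nonneg)
  fix y :: "nat \<Rightarrow> complex" assume y0: "y \<longlonglongrightarrow> 0"
  then obtain Yb where Yb: "Yb > 0" "\<And>k. norm (y k) \<le> Yb"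
    using convergent_imp_Bseq[of y] by (auto simp: convergent_def Bseq_def)
  have gys: "summable (\<lambda>k. norm (g k * y k))"
    by (rule summable_comparison_test[OF _ summable_mult2[OF gs, of Yb]])
       (auto simp: norm_mult intro!: mult_left_mono Yb)
  show "(\<lambda>m. \<Sum>k\<le>m. E m k * y k) \<longlonglongrightarrow> (\<Sum>k. g k * y k)"
  proof (rule LIMSEQ_I)
    fix e :: real assume e: "e > 0"
    define d where "d = e / (4 * (M + 1))"
    have d: "d > 0" using e M0 by (simp add: d_def)
    have "2 * M * d < e / 2" using e M0 by (simp add: d_def field_simps)
    obtain K where K: "\<And>k. k \<ge> K \<Longrightarrow> norm (y k) < d"
      using LIMSEQ_D[OF y0 d] by auto
    have fin0: "(\<lambda>m. \<Sum>k<K. (E m k - g k) * y k) \<longlonglongrightarrow> (\<Sum>k<K. (g k - g k) * y k)"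
      by (intro tendsto_intros col)
    hence f0: "(\<lambda>m. \<Sum>k<K. (E m k - g k) * y k) \<longlonglongrightarrow> 0" by simp
    obtain N where N: "\<And>m. m \<ge> N \<Longrightarrow> norm (\<Sum>k<K. (E m k - g k) * y k) < e/2"
      using LIMSEQ_D[OF f0, of "e/2"] e by auto
    show "\<exists>no. \<forall>m\<ge>no. norm ((\<Sum>k\<le>m. E m k * y k) - (\<Sum>k. g k * y k)) < e"
    proof (intro exI[of _ "max N K"] allI impI)
      fix m assume m: "max N K \<le> m"
      have split1: "(\<Sum>k\<le>m. E m k * y k) = (\<Sum>k<K. E m k * y k) + (\<Sum>k\<in>{K..m}. E m k * y k)"
      proof -
        have "{..m} = {..<K} \<union> {K..m}" using m by auto
        thus ?thesis by (simp add: sum.union_disjoint[symmetric] ivl_disj_int)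
      qed
      have split2: "(\<Sum>k. g k * y k) = (\<Sum>k. g (k + K) * y (k + K)) + (\<Sum>k<K. g k * y k)"
        by (rule suminf_split_initial_segment[OF summable_norm_cancel[OF gys]])
      have b1: "norm (\<Sum>k\<in>{K..m}. E m k * y k) \<le> M * d"
      proof -
        have "norm (\<Sum>k\<in>{K..m}. E m k * y k) \<le> (\<Sum>k\<in>{K..m}. norm (E m k) * d)"
          by (rule order_trans[OF norm_sum sum_mono]) (auto simp: norm_mult intro!: mult_left_mono less_imp_le[OF K])
        also have "\<dots> = (\<Sum>k\<in>{K..m}. norm (E m k)) * d" by (simp add: sum_distrib_right)
        also have "(\<Sum>k\<in>{K..m}. norm (E m k)) \<le> (\<Sum>k\<le>m. norm (E m k))"
          by (rule sum_mono2) auto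
        hence "(\<Sum>k\<in>{K..m}. norm (E m k)) * d \<le> M * d" using bnd[of m] d
          by (intro mult_right_mono) auto
        finally show ?thesis .
      qed
      have b2: "norm (\<Sum>k. g (k + K) * y (k + K)) \<le> M * d"
      proof -
        have s1: "summable (\<lambda>k. norm (g (k + K) * y (k + K)))"
          using summable_iff_shift[of "\<lambda>k. norm (g k * y k)" K] gys by simp
        have s0: "summable (\<lambda>k. norm (g (k + K)))"
          using summable_iff_shift[of "\<lambda>k. norm (g k)" K] gs by simp
        have s2: "summable (\<lambda>k. norm (g (k + K)) * d)" using s0 by (rule summable_mult2)
        have "norm (\<Sum>k. g (k + K) * y (k + K)) \<le> (\<Sum>k. norm (g (k + K) * y (k + K)))"
          by (rule summable_norm[OF s1])
        also have "\<dots> \<le> (\<Sum>k. norm (g (k + K)) * d)"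
          by (rule suminf_le[OF _ s1 s2]) (auto simp: norm_mult intro!: mult_left_mono less_imp_le[OF K])
        also have "\<dots> = (\<Sum>k. norm (g (k + K))) * d" by (rule suminf_mult2[symmetric, OF s0])
        also have "(\<Sum>k. norm (g (k + K))) \<le> (\<Sum>k. norm (g k))"
          using suminf_split_initial_segment[OF gs, of K] by (simp add: sum_nonneg)
        hence "(\<Sum>k. norm (g (k + K))) * d \<le> M * d" using gM d by (intro mult_right_mono) auto
        finally show ?thesis .
      qed
      have "(\<Sum>k\<le>m. E m k * y k) - (\<Sum>k. g k * y k) =
            (\<Sum>k<K. (E m k - g k) * y k) + (\<Sum>k\<in>{K..m}. E m k * y k) - (\<Sum>k. g (k + K) * y (k + K))"
        unfolding split1 split2 by (simp add: left_diff_distrib sum_subtractf)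
      hence "norm ((\<Sum>k\<le>m. E m k * y k) - (\<Sum>k. g k * y k)) \<le>
             norm (\<Sum>k<K. (E m k - g k) * y k) + norm (\<Sum>k\<in>{K..m}. E m k * y k) + norm (\<Sum>k. g (k + K) * y (k + K))"
        using norm_triangle_ineq4[of "(\<Sum>k<K. (E m k - g k) * y k) + (\<Sum>k\<in>{K..m}. E m k * y k)" "\<Sum>k. g (k + K) * y (k + K)"]
          norm_triangle_ineq[of "\<Sum>k<K. (E m k - g k) * y k" "\<Sum>k\<in>{K..m}. E m k * y k"]
        by simp
      also have "\<dots> < e/2 + M * d + M * d" using N[of m] m b1 b2 by simp
      also have "\<dots> < e" using \<open>2 * M * d < e / 2\<close> by simp
      finally show "norm ((\<Sum>k\<le>m. E m k * y k) - (\<Sum>k. g k * y k)) < e" .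
    qed
  qed
qed

definition dl :: "(nat \<Rightarrow> real) \<Rightarrow> nat \<Rightarrow> real" where
  "dl lam k = lam k - lam_prev lam k"

definition Bop :: "real \<Rightarrow> real \<Rightarrow> real \<Rightarrow> (nat \<Rightarrow> complex) \<Rightarrow> nat \<Rightarrow> complex" where
  "Bop r s t x k = of_real r * x k + of_real s * seq_back x 1 k + of_real t * seq_back x 2 k"

definition zz :: "(nat \<Rightarrow> real) \<Rightarrow> (nat \<Rightarrow> complex) \<Rightarrow> nat \<Rightarrow> complex" where
  "zz lam y k = (of_real (lam k) * y k - of_real (lam_prev lam k) * seq_back y 1 k) / of_real (dl lam k)"

definition Phi :: "real \<Rightarrow> real \<Rightarrow> real \<Rightarrow> (nat \<Rightarrow> real) \<Rightarrow> (nat \<Rightarrow> complex) \<Rightarrow> nat \<Rightarrow> complex" where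
  "Phi r s t lam y j = (\<Sum>i\<le>j. dmat r s t j i * zz lam y i)"

definition hh :: "complex \<Rightarrow> complex \<Rightarrow> nat \<Rightarrow> complex" where
  "hh a b m = (\<Sum>v = 0..m. a ^ (m - v) * b ^ v)"

lemma hh_0 [simp]: "hh a b 0 = 1" by (simp add: hh_def)

lemma hh_Suc: "hh a b (Suc m) = a * hh a b m + b ^ Suc m"
proof -
  have "hh a b (Suc m) = (\<Sum>v = 0..m. a ^ (Suc m - v) * b ^ v) + b ^ Suc m"
    by (simp add: hh_def sum.atLeast0_atMost_Suc)
  also have "(\<Sum>v = 0..m. a ^ (Suc m - v) * b ^ v) = a * hh a b m"
    unfolding hh_def sum_distrib_left
    by (rule sum.cong) (auto simp: Suc_diff_le)
  finally show ?thesis .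
qed

lemma hh_rec: "hh a b (Suc (Suc m)) = (a + b) * hh a b (Suc m) - a * b * hh a b m"
  by (simp add: hh_Suc algebra_simps)

lemma rho_sum: "r \<noteq> 0 \<Longrightarrow> rho1 r s t + rho2 r s t = - of_real s / of_real r"
  by (simp add: rho1_def rho2_def field_simps)

lemma rho_prod: "r \<noteq> 0 \<Longrightarrow> rho1 r s t * rho2 r s t = of_real t / of_real r"
proof -
  assume r: "r \<noteq> 0"
  define c where "c = csqrt (of_real (s^2 - 4*t*r))"
  have c2: "c * c = of_real (s^2 - 4*t*r)" unfolding c_def by (metis power2_csqrt power2_eq_square)
  have "rho1 r s t * rho2 r s t = ((- of_real s + c) * (- of_real s - c)) / (4 * of_real r * of_real r)"
    by (simp add: rho1_def rho2_def c_def field_simps)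
  also have "(- of_real s + c) * (- of_real s - c) = of_real s * of_real s - c * c"
    by (simp add: algebra_simps)
  also have "\<dots> = 4 * of_real t * of_real r" by (simp add: c2 power2_eq_square)
  finally show ?thesis using r by (simp add: field_simps)
qed

lemma dmat_eq: "dmat r s t j i = (if i \<le> j then hh (rho1 r s t) (rho2 r s t) (j - i) / of_real r else 0)"
  by (simp add: dmat_def hh_def)

lemma dmat_diag: "r \<noteq> 0 \<Longrightarrow> dmat r s t i i = 1 / of_real r"
  by (simp add: dmat_eq)

lemma Bop_dcol:
  assumes r: "r \<noteq> 0"
  shows "Bop r s t (\<lambda>j. dmat r s t j i) j = (if j = i then 1 else 0)"
proof -
  define a where "a = rho1 r s t"
  define b where "b = rho2 r s t"
  have ab: "a + b = - of_real s / of_real r" "a * b = of_real t / of_real r"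
    using rho_sum[OF r] rho_prod[OF r] by (simp_all add: a_def b_def)
  have cr: "(of_real r :: complex) \<noteq> 0" using r by simp
  show ?thesis
  proof (cases "j < i")
    case True thus ?thesis by (auto simp: Bop_def seq_back_def dmat_eq)
  next
    case False
    then obtain m where m: "j = i + m" by (metis le_Suc_ex not_less)
    show ?thesis
    proof (cases m)
      case 0 thus ?thesis using m cr by (auto simp: Bop_def seq_back_def dmat_eq)
    next
      case (Suc m1)
      show ?thesis
      proof (cases m1)
        case 0
        have "Bop r s t (\<lambda>j. dmat r s t j i) j = hh a b 1 + of_real s / of_real r"
          using m Suc 0 cr by (simp add: Bop_def seq_back_def dmat_eq a_def b_def) linarith
        also have "\<dots> = 0" using ab by (simp add: hh_Suc)
        finally show ?thesis using m Suc by simp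
      next
        case (Suc m2)
        have "Bop r s t (\<lambda>j. dmat r s t j i) j =
              hh a b (Suc (Suc m2)) + of_real s / of_real r * hh a b (Suc m2) + of_real t / of_real r * hh a b m2"
          using m \<open>m = Suc m1\<close> Suc cr
          by (simp add: Bop_def seq_back_def dmat_eq a_def b_def field_simps)
        also have "\<dots> = 0" unfolding hh_rec ab by (simp add: algebra_simps)
        finally show ?thesis using m \<open>m = Suc m1\<close> by simp
      qed
    qed
  qed
qed

lemma dl_pos:
  assumes "strict_mono lam" "\<forall>k. 0 < lam k"
  shows "dl lam k > 0"
proof (cases k)
  case 0 thus ?thesis using assms by (simp add: dl_def lam_prev_def)
next
  case (Suc k') thus ?thesis using assms(1) by (simp add: dl_def lam_prev_def strict_mono_def)
qed

lemma Phi_ext: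
  assumes "j \<le> J"
  shows "Phi r s t lam y j = (\<Sum>i\<le>J. dmat r s t j i * zz lam y i)"
proof -
  have "{..J} = {..j} \<union> {j<..J}" using assms by auto
  hence "(\<Sum>i\<le>J. dmat r s t j i * zz lam y i) =
         (\<Sum>i\<le>j. dmat r s t j i * zz lam y i) + (\<Sum>i\<in>{j<..J}. dmat r s t j i * zz lam y i)"
    by (simp only:) (rule sum.union_disjoint, auto)
  also have "(\<Sum>i\<in>{j<..J}. dmat r s t j i * zz lam y i) = 0"
    by (rule sum.neutral) (auto simp: dmat_def)
  finally show ?thesis by (simp add: Phi_def)
qed

lemma sb_Phi:
  "seq_back (Phi r s t lam y) a j = (\<Sum>i\<le>j. seq_back (\<lambda>j'. dmat r s t j' i) a j * zz lam y i)"
proof (cases "j < a")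
  case True thus ?thesis by (simp add: seq_back_def)
next
  case False
  thus ?thesis using Phi_ext[of "j - a" j r s t lam y] by (simp add: seq_back_def)
qed

lemma Bop_Phi:
  assumes r: "r \<noteq> 0"
  shows "Bop r s t (Phi r s t lam y) j = zz lam y j"
proof -
  have "Bop r s t (Phi r s t lam y) j = (\<Sum>i\<le>j. Bop r s t (\<lambda>j'. dmat r s t j' i) j * zz lam y i)"
    by (simp add: Bop_def sb_Phi Phi_def sum_distrib_left sum.distrib algebra_simps)
  also have "\<dots> = (\<Sum>i\<le>j. (if j = i then zz lam y i else 0))"
    by (rule sum.cong) (auto simp: Bop_dcol[OF r])
  also have "\<dots> = zz lam y j" by simp
  finally show ?thesis .
qed

lemma What_Bop:
  "What r s t lam x n = (1 / of_real (lam n)) * (\<Sum>k = 0..n. of_real (dl lam k) * Bop r s t x k)"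
  by (simp add: What_def Bop_def dl_def)

lemma tele:
  assumes "\<And>k. dl lam k > 0"
  shows "(\<Sum>k = 0..n. of_real (dl lam k) * zz lam y k) = of_real (lam n) * y n"
proof (induction n)
  case 0
  have "dl lam 0 \<noteq> 0" using assms[of 0] by simp
  thus ?case by (simp add: zz_def lam_prev_def seq_back_def)
next
  case (Suc n)
  have "dl lam (Suc n) \<noteq> 0" using assms[of "Suc n"] by simp
  hence "of_real (dl lam (Suc n)) * zz lam y (Suc n) = of_real (lam (Suc n)) * y (Suc n) - of_real (lam n) * y n"
    by (simp add: zz_def lam_prev_def seq_back_def)
  thus ?case using Suc by simp
qed

lemma What_Phi:
  assumes r: "r \<noteq> 0" and "strict_mono lam" "\<forall>k. 0 < lam k"
  shows "What r s t lam (Phi r s t lam y) = y"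
proof
  fix n
  have dp: "\<And>k. dl lam k > 0" using dl_pos assms(2,3) by blast
  have "lam n \<noteq> 0" using assms(3) by (metis less_irrefl)
  thus "What r s t lam (Phi r s t lam y) n = y n"
    by (simp add: What_Bop Bop_Phi[OF r] tele[OF dp])
qed

lemma What_inj:
  assumes r: "r \<noteq> 0" and "strict_mono lam" "\<forall>k. 0 < lam k"
  and eq: "What r s t lam x = What r s t lam x'"
  shows "x = x'"
proof -
  have dp: "\<And>k. dl lam k > 0" using dl_pos assms(2,3) by blast
  define S where "S x n = (\<Sum>k = 0..n. of_real (dl lam k) * Bop r s t x k)" for x n
  have SS: "S x n = S x' n" for n
  proof -
    have "lam n \<noteq> 0" using assms(3) by (metis less_irrefl)
    thus ?thesis using fun_cong[OF eq, of n] by (simp add: What_Bop S_def)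
  qed
  have BB: "Bop r s t x n = Bop r s t x' n" for n
  proof (cases n)
    case 0 thus ?thesis using SS[of 0] dp[of 0] by (simp add: S_def)
  next
    case (Suc m)
    have "S x (Suc m) - S x m = S x' (Suc m) - S x' m" using SS by simp
    hence "of_real (dl lam (Suc m)) * Bop r s t x (Suc m) = of_real (dl lam (Suc m)) * Bop r s t x' (Suc m)"
      by (simp add: S_def)
    thus ?thesis using dp[of "Suc m"] Suc by simp
  qed
  have "x n = x' n" for n
  proof (induction n rule: less_induct)
    case (less n)
    have sb: "seq_back x a n = seq_back x' a n" if "a > 0" for a
      using less that by (simp add: seq_back_def)
    have "of_real r * x n = of_real r * x' n"
      using BB[of n] sb[of 1] sb[of 2] by (simp add: Bop_def)
    thus ?case using r by simp
  qed
  thus ?thesis by blast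
qed

lemma Phi_What:
  assumes r: "r \<noteq> 0" and "strict_mono lam" "\<forall>k. 0 < lam k"
  shows "Phi r s t lam (What r s t lam x) = x"
  by (rule What_inj[where s=s and t=t, OF assms]) (simp add: What_Phi[OF assms])

lemma sum_shift0:
  fixes f :: "nat \<Rightarrow> 'a::comm_monoid_add"
  assumes "f 0 = 0"
  shows "(\<Sum>i\<le>m. f i) = (\<Sum>k<m. f (Suc k))"
  by (induction m) (simp_all add: assms)

lemma ps_ident:
  assumes r: "r \<noteq> 0" and lm: "strict_mono lam" "\<forall>k. 0 < lam k"
  shows "(\<Sum>j\<le>m. a n j * Phi r s t lam y j) =
         (\<Sum>k<m. ghat_m r s t lam a n k m * y k) +
         (1 / of_real r) * (of_real (lam m) / of_real (lam m - lam_prev lam m)) * a n m * y m"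
proof -
  define S where "S i = (\<Sum>j = i..m. dmat r s t j i * a n j)" for i
  define z where "z = zz lam y"
  have dp: "\<And>k. dl lam k > 0" using dl_pos lm by blast
  have step1: "(\<Sum>j\<le>m. a n j * Phi r s t lam y j) = (\<Sum>i\<le>m. z i * S i)"
  proof -
    have "(\<Sum>j\<le>m. a n j * Phi r s t lam y j) = (\<Sum>j\<le>m. \<Sum>i\<le>m. a n j * (dmat r s t j i * z i))"
      by (rule sum.cong[OF refl]) (simp add: Phi_ext[of _ m] sum_distrib_left z_def)
    also have "\<dots> = (\<Sum>i\<le>m. \<Sum>j\<le>m. a n j * (dmat r s t j i * z i))" by (rule sum.swap)
    also have "\<dots> = (\<Sum>i\<le>m. z i * S i)"
    proof (rule sum.cong[OF refl])
      fix i assume i: "i \<in> {..m}"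
      have "{..m} = {..<i} \<union> {i..m}" using i by auto
      hence "(\<Sum>j\<le>m. a n j * (dmat r s t j i * z i)) =
             (\<Sum>j<i. a n j * (dmat r s t j i * z i)) + (\<Sum>j=i..m. a n j * (dmat r s t j i * z i))"
        by (simp only:) (rule sum.union_disjoint, auto)
      also have "(\<Sum>j<i. a n j * (dmat r s t j i * z i)) = 0"
        by (rule sum.neutral) (auto simp: dmat_def)
      finally show "(\<Sum>j\<le>m. a n j * (dmat r s t j i * z i)) = z i * S i"
        by (simp add: S_def sum_distrib_left algebra_simps)
    qed
    finally show ?thesis .
  qed
  have step2: "z i * S i = of_real (lam i) / of_real (dl lam i) * S i * y i
      - of_real (lam_prev lam i) / of_real (dl lam i) * S i * seq_back y 1 i" for i
    by (simp add: z_def zz_def diff_divide_distrib algebra_simps)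
  have step3: "(\<Sum>i\<le>m. of_real (lam_prev lam i) / of_real (dl lam i) * S i * seq_back y 1 i) =
      (\<Sum>k<m. of_real (lam k) / of_real (lam (Suc k) - lam k) * S (Suc k) * y k)"
    by (subst sum_shift0) (simp_all add: seq_back_def lam_prev_def dl_def)
  have Sm: "S m = a n m / of_real r" by (simp add: S_def dmat_diag[OF r])
  have step4: "(\<Sum>i\<le>m. of_real (lam i) / of_real (dl lam i) * S i * y i) =
      (\<Sum>k<m. of_real (lam k) / of_real (dl lam k) * S k * y k) + of_real (lam m) / of_real (dl lam m) * (a n m / of_real r) * y m"
    by (simp add: lessThan_Suc_atMost[symmetric] Sm)
  have step5: "ghat_m r s t lam a n k m * y k =
      of_real (lam k) / of_real (dl lam k) * S k * y k - of_real (lam k) / of_real (lam (Suc k) - lam k) * S (Suc k) * y k" for k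
    by (simp add: ghat_m_def S_def dl_def algebra_simps)
  define A where "A k = of_real (lam k) / of_real (dl lam k) * S k * y k" for k
  define B where "B k = of_real (lam k) / of_real (lam (Suc k) - lam k) * S (Suc k) * y k" for k
  have g: "(\<Sum>k<m. ghat_m r s t lam a n k m * y k) = (\<Sum>k<m. A k) - (\<Sum>k<m. B k)"
    by (simp add: step5 A_def B_def sum_subtractf)
  have "(\<Sum>j\<le>m. a n j * Phi r s t lam y j) = (\<Sum>i\<le>m. z i * S i)" by (rule step1)
  also have "\<dots> = (\<Sum>i\<le>m. of_real (lam i) / of_real (dl lam i) * S i * y i)
      - (\<Sum>i\<le>m. of_real (lam_prev lam i) / of_real (dl lam i) * S i * seq_back y 1 i)"
    by (simp add: step2 sum_subtractf)
  also have "\<dots> = (\<Sum>k<m. A k) + of_real (lam m) / of_real (dl lam m) * (a n m / of_real r) * y m - (\<Sum>k<m. B k)"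
    unfolding step3 step4 A_def B_def by simp
  also have "\<dots> = (\<Sum>k<m. ghat_m r s t lam a n k m * y k) + of_real (lam m) / of_real (dl lam m) * (a n m / of_real r) * y m"
    by (simp add: g)
  also have "of_real (lam m) / of_real (dl lam m) * (a n m / of_real r) * y m =
      (1 / of_real r) * (of_real (lam m) / of_real (lam m - lam_prev lam m)) * a n m * y m"
    by (simp add: dl_def)
  finally show ?thesis .
qed

definition ey :: "(nat \<Rightarrow> real) \<Rightarrow> nat \<Rightarrow> nat \<Rightarrow> complex" where
  "ey lam k n = (if k \<le> n then of_real (dl lam k / lam n) else 0)"

lemma Phi_ey:
  assumes r: "r \<noteq> 0" and lm: "strict_mono lam" "\<forall>k. 0 < lam k"
  shows "Phi r s t lam (ey lam k) j = dmat r s t j k"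
proof -
  have dp: "\<And>k. dl lam k > 0" using dl_pos lm by blast
  have ln: "\<And>i. lam i \<noteq> 0" using lm(2) by (metis less_irrefl)
  have zk: "zz lam (ey lam k) i = (if i = k then 1 else 0)" for i
  proof -
    consider "i < k" | "i = k" | "i > k" by arith
    thus ?thesis
    proof cases
      case 1 thus ?thesis by (auto simp: zz_def ey_def seq_back_def)
    next
      case 2
      have "dl lam k \<noteq> 0" using dp[of k] by simp
      thus ?thesis using 2 ln[of k]
        by (simp add: zz_def ey_def seq_back_def lam_prev_def field_simps) linarith
    next
      case 3
      then obtain i' where i': "i = Suc i'" "k \<le> i'" by (metis Suc_le_eq less_imp_Suc_add le_add1 add_Suc_right)
      show ?thesis using 3 i' ln[of i] ln[of i']
        by (simp add: zz_def ey_def seq_back_def lam_prev_def field_simps)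
    qed
  qed
  show ?thesis
  proof (cases "k \<le> j")
    case True thus ?thesis by (simp add: Phi_def zk if_distrib[of "\<lambda>x. _ * x"] cong: if_cong)
  next
    case False thus ?thesis by (simp add: Phi_def zk dmat_def)
  qed
qed

lemma cvx_powr:
  fixes a b l p :: real
  assumes ab: "a \<ge> 0" "b \<ge> 0" and l: "0 \<le> l" "l \<le> 1" and p: "p \<ge> 1"
  shows "(l * a + (1 - l) * b) powr p \<le> l * a powr p + (1 - l) * b powr p"
proof (cases "a = 0 \<or> b = 0")
  case True
  have key: "(c * x) powr p \<le> c * x powr p" if "0 \<le> c" "c \<le> 1" "x \<ge> 0" for c x :: real
  proof (cases "c = 0")
    case True thus ?thesis using p by simp
  next
    case False
    have "(c * x) powr p = c powr p * x powr p" using that by (simp add: powr_mult)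
    also have "c powr p \<le> c" using powr_le_one_le[of c p] that False p by simp
    hence "c powr p * x powr p \<le> c * x powr p" by (intro mult_right_mono) auto
    finally show ?thesis .
  qed
  show ?thesis
  proof (cases "a = 0")
    case True thus ?thesis using key[of "1 - l" b] l ab p by simp
  next
    case False
    hence "b = 0" using True by simp
    thus ?thesis using key[of l a] l ab p by simp
  qed
next
  case False
  hence "a > 0" "b > 0" using ab by auto
  have "((1 - (1 - l)) *\<^sub>R a + (1 - l) *\<^sub>R b) powr p \<le> (1 - (1 - l)) * a powr p + (1 - l) * b powr p"
    by (rule convex_onD[OF powr_convex[OF p]]) (use \<open>a > 0\<close> \<open>b > 0\<close> l in auto)
  thus ?thesis by simp
qed

lemma lp_suff:
  fixes g :: "nat \<Rightarrow> nat \<Rightarrow> complex" and p M :: real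
  assumes p: "p \<ge> 1" and gs: "\<And>n. summable (\<lambda>k. norm (g n k))"
  and aF: "\<And>F. finite F \<Longrightarrow> summable (\<lambda>n. norm (\<Sum>k\<in>F. g n k) powr p) \<and>
              (\<Sum>n. norm (\<Sum>k\<in>F. g n k) powr p) \<le> M"
  and y0: "y \<longlonglongrightarrow> 0"
  shows "summable (\<lambda>n. norm (\<Sum>k. g n k * y k) powr p)"
proof -
  have p0: "p > 0" using p by simp
  have Fb: "(\<Sum>n<N. norm (\<Sum>k\<in>F. g n k) powr p) \<le> M" if "finite F" for F N
    using aF[OF that] by (meson order_trans sum_le_suminf finite_lessThan powr_ge_zero)
  define V0 where "V0 = 2 powr p * (2 * M)"
  define \<Phi> where "\<Phi> N K u = (\<Sum>n<N. norm (\<Sum>k<K. g n k * of_real (u k)) powr p)" for N K and u :: "nat \<Rightarrow> real"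
  have vert: "\<Phi> N K u \<le> V0" if "\<And>k. u k = 1 \<or> u k = -1" for N K u
  proof -
    define Fp where "Fp = {k\<in>{..<K}. u k = 1}"
    define Fm where "Fm = {k\<in>{..<K}. u k \<noteq> 1}"
    have dec: "(\<Sum>k<K. g n k * of_real (u k)) = (\<Sum>k\<in>Fp. g n k) - (\<Sum>k\<in>Fm. g n k)" for n
    proof -
      have "{..<K} = Fp \<union> Fm" by (auto simp: Fp_def Fm_def)
      hence "(\<Sum>k<K. g n k * of_real (u k)) = (\<Sum>k\<in>Fp \<union> Fm. g n k * of_real (u k))" by simp
      also have "\<dots> = (\<Sum>k\<in>Fp. g n k * of_real (u k)) + (\<Sum>k\<in>Fm. g n k * of_real (u k))"
        by (rule sum.union_disjoint) (auto simp: Fp_def Fm_def)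
      also have "(\<Sum>k\<in>Fp. g n k * of_real (u k)) = (\<Sum>k\<in>Fp. g n k)"
        by (rule sum.cong) (auto simp: Fp_def)
      also have "(\<Sum>k\<in>Fm. g n k * of_real (u k)) = - (\<Sum>k\<in>Fm. g n k)"
      proof -
        have "(\<Sum>k\<in>Fm. g n k * of_real (u k)) = (\<Sum>k\<in>Fm. - g n k)"
        proof (rule sum.cong[OF refl])
          fix k assume "k \<in> Fm"
          hence "u k = -1" using that[of k] by (auto simp: Fm_def)
          thus "g n k * of_real (u k) = - g n k" by simp
        qed
        thus ?thesis by (simp add: sum_negf)
      qed
      finally show ?thesis by simp
    qed
    have "\<Phi> N K u \<le> (\<Sum>n<N. 2 powr p * (norm (\<Sum>k\<in>Fp. g n k) powr p + norm (\<Sum>k\<in>Fm. g n k) powr p))"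
      unfolding \<Phi>_def
    proof (rule sum_mono)
      fix n
      have "norm (\<Sum>k<K. g n k * of_real (u k)) powr p \<le> (norm (\<Sum>k\<in>Fp. g n k) + norm (\<Sum>k\<in>Fm. g n k)) powr p"
        unfolding dec using p0 by (intro powr_mono2 norm_triangle_ineq4) auto
      also have "\<dots> \<le> 2 powr p * (norm (\<Sum>k\<in>Fp. g n k) powr p + norm (\<Sum>k\<in>Fm. g n k) powr p)"
        by (rule powr_add_le) (use p0 in auto)
      finally show "norm (\<Sum>k<K. g n k * of_real (u k)) powr p \<le> 2 powr p * (norm (\<Sum>k\<in>Fp. g n k) powr p + norm (\<Sum>k\<in>Fm. g n k) powr p)" .
    qed
    also have "\<dots> = 2 powr p * ((\<Sum>n<N. norm (\<Sum>k\<in>Fp. g n k) powr p) + (\<Sum>n<N. norm (\<Sum>k\<in>Fm. g n k) powr p))"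
      by (simp add: sum_distrib_left[symmetric] sum.distrib)
    also have "\<dots> \<le> 2 powr p * (M + M)"
      by (intro mult_left_mono add_mono Fb) (auto simp: Fp_def Fm_def)
    finally show ?thesis by (simp add: V0_def)
  qed
  have cube: "\<Phi> N K u \<le> V0" if "\<And>k. \<bar>u k\<bar> \<le> 1" "\<And>k. k \<ge> j \<Longrightarrow> u k = 1 \<or> u k = -1" for N K u j
    using that
  proof (induction j arbitrary: u)
    case 0 thus ?case using vert by blast
  next
    case (Suc j)
    define l where "l = (1 + u j) / 2"
    have l: "0 \<le> l" "l \<le> 1" using Suc.prems(1)[of j] by (auto simp: l_def abs_le_iff)
    define up where "up = u(j := 1)"
    define um where "um = u(j := -1)"
    have Pp: "\<Phi> N K up \<le> V0"
      by (rule Suc.IH) (use Suc.prems in \<open>auto simp: up_def\<close>)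
    have Pm: "\<Phi> N K um \<le> V0"
      by (rule Suc.IH) (use Suc.prems in \<open>auto simp: um_def\<close>)
    have ucomb: "u k = l * up k + (1 - l) * um k" for k
      by (auto simp: up_def um_def l_def field_simps)
    have lin: "(\<Sum>k<K. g n k * of_real (u k)) =
        of_real l * (\<Sum>k<K. g n k * of_real (up k)) + of_real (1 - l) * (\<Sum>k<K. g n k * of_real (um k))" for n
      by (simp add: ucomb sum_distrib_left sum.distrib[symmetric] algebra_simps)
    have nl: "cmod (1 - complex_of_real l) = 1 - l"
      using l by (metis abs_of_nonneg diff_ge_0_iff_ge norm_of_real of_real_1 of_real_diff)
    have "\<Phi> N K u \<le> (\<Sum>n<N. l * norm (\<Sum>k<K. g n k * of_real (up k)) powr p + (1 - l) * norm (\<Sum>k<K. g n k * of_real (um k)) powr p)"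
      unfolding \<Phi>_def
    proof (rule sum_mono)
      fix n
      have "norm (\<Sum>k<K. g n k * of_real (u k)) \<le> l * norm (\<Sum>k<K. g n k * of_real (up k)) + (1 - l) * norm (\<Sum>k<K. g n k * of_real (um k))"
        unfolding lin using l norm_triangle_ineq[of "complex_of_real l * (\<Sum>k<K. g n k * complex_of_real (up k))"
          "complex_of_real (1 - l) * (\<Sum>k<K. g n k * complex_of_real (um k))"]
        by (simp add: norm_mult nl)
      hence "norm (\<Sum>k<K. g n k * of_real (u k)) powr p \<le> (l * norm (\<Sum>k<K. g n k * of_real (up k)) + (1 - l) * norm (\<Sum>k<K. g n k * of_real (um k))) powr p"
        using p0 by (intro powr_mono2) auto
      also have "\<dots> \<le> l * norm (\<Sum>k<K. g n k * of_real (up k)) powr p + (1 - l) * norm (\<Sum>k<K. g n k * of_real (um k)) powr p"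
        by (rule cvx_powr) (use l p in auto)
      finally show "norm (\<Sum>k<K. g n k * of_real (u k)) powr p \<le> l * norm (\<Sum>k<K. g n k * of_real (up k)) powr p + (1 - l) * norm (\<Sum>k<K. g n k * of_real (um k)) powr p" .
    qed
    also have "\<dots> = l * \<Phi> N K up + (1 - l) * \<Phi> N K um"
      by (simp add: \<Phi>_def sum.distrib sum_distrib_left)
    also have "\<dots> \<le> l * V0 + (1 - l) * V0"
      using l Pp Pm by (intro add_mono mult_left_mono) auto
    finally show ?case by (simp add: algebra_simps)
  qed
  have realb: "\<Phi> N K u \<le> V0" if "\<And>k. \<bar>u k\<bar> \<le> 1" for N K u
  proof -
    define u' where "u' k = (if k < K then u k else 1)" for k
    have "\<Phi> N K u' \<le> V0" by (rule cube[where j=K]) (use that in \<open>auto simp: u'_def\<close>)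
    moreover have "\<Phi> N K u' = \<Phi> N K u" unfolding \<Phi>_def u'_def by simp
    ultimately show ?thesis by simp
  qed
  define C1 where "C1 = 2 powr p * (V0 + V0)"
  have cplxb: "(\<Sum>n<N. norm (\<Sum>k<K. g n k * w k) powr p) \<le> C1" if "\<And>k. norm (w k) \<le> 1" for N K w
  proof -
    define u where "u k = Re (w k)" for k
    define v where "v k = Im (w k)" for k
    have uv: "\<bar>u k\<bar> \<le> 1" "\<bar>v k\<bar> \<le> 1" for k
      using that[of k] abs_Re_le_cmod[of "w k"] abs_Im_le_cmod[of "w k"] by (auto simp: u_def v_def)
    have wd: "(\<Sum>k<K. g n k * w k) = (\<Sum>k<K. g n k * of_real (u k)) + \<i> * (\<Sum>k<K. g n k * of_real (v k))" for n
    proof -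
      have "w k = of_real (u k) + \<i> * of_real (v k)" for k by (simp add: u_def v_def complex_eq_iff)
      thus ?thesis by (simp add: sum_distrib_left sum.distrib[symmetric] algebra_simps)
    qed
    have "(\<Sum>n<N. norm (\<Sum>k<K. g n k * w k) powr p) \<le>
          (\<Sum>n<N. 2 powr p * (norm (\<Sum>k<K. g n k * of_real (u k)) powr p + norm (\<Sum>k<K. g n k * of_real (v k)) powr p))"
    proof (rule sum_mono)
      fix n
      have "norm (\<Sum>k<K. g n k * w k) powr p \<le> (norm (\<Sum>k<K. g n k * of_real (u k)) + norm (\<Sum>k<K. g n k * of_real (v k))) powr p"
        unfolding wd using p0 by (intro powr_mono2) (auto intro: order_trans[OF norm_triangle_ineq] simp: norm_mult)
      also have "\<dots> \<le> 2 powr p * (norm (\<Sum>k<K. g n k * of_real (u k)) powr p + norm (\<Sum>k<K. g n k * of_real (v k)) powr p)"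
        by (rule powr_add_le) (use p0 in auto)
      finally show "norm (\<Sum>k<K. g n k * w k) powr p \<le> 2 powr p * (norm (\<Sum>k<K. g n k * of_real (u k)) powr p + norm (\<Sum>k<K. g n k * of_real (v k)) powr p)" .
    qed
    also have "\<dots> = 2 powr p * (\<Phi> N K u + \<Phi> N K v)"
      by (simp add: \<Phi>_def sum_distrib_left[symmetric] sum.distrib)
    also have "\<dots> \<le> C1" unfolding C1_def
      by (intro mult_left_mono add_mono realb uv) auto
    finally show ?thesis .
  qed
  obtain Yb where Yb: "Yb > 0" "\<And>k. norm (y k) \<le> Yb"
    using convergent_imp_Bseq[of y] y0 by (auto simp: convergent_def Bseq_def)
  have fin: "(\<Sum>n<N. norm (\<Sum>k<K. g n k * y k) powr p) \<le> Yb powr p * C1" for N K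
  proof -
    define w where "w k = y k / of_real Yb" for k
    have wn: "norm (w k) \<le> 1" for k using Yb by (simp add: w_def norm_divide)
    have "norm (\<Sum>k<K. g n k * y k) powr p = Yb powr p * norm (\<Sum>k<K. g n k * w k) powr p" for n
    proof -
      have "(\<Sum>k<K. g n k * y k) = of_real Yb * (\<Sum>k<K. g n k * w k)"
        using Yb by (simp add: w_def sum_distrib_left)
      hence "norm (\<Sum>k<K. g n k * y k) = Yb * norm (\<Sum>k<K. g n k * w k)"
        using Yb by (simp add: norm_mult)
      thus ?thesis using Yb by (simp add: powr_mult)
    qed
    hence "(\<Sum>n<N. norm (\<Sum>k<K. g n k * y k) powr p) = Yb powr p * (\<Sum>n<N. norm (\<Sum>k<K. g n k * w k) powr p)"
      by (simp add: sum_distrib_left)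
    also have "\<dots> \<le> Yb powr p * C1" by (intro mult_left_mono cplxb wn) simp
    finally show ?thesis .
  qed
  have rs: "summable (\<lambda>k. g n k * y k)" for n
  proof (rule summable_norm_cancel, rule summable_comparison_test[OF _ summable_mult2[OF gs[of n], of Yb]])
    show "\<exists>N. \<forall>k\<ge>N. norm (norm (g n k * y k)) \<le> norm (g n k) * Yb"
      using Yb by (auto simp: norm_mult intro!: mult_left_mono)
  qed
  have lim: "(\<Sum>n<N. norm (\<Sum>k. g n k * y k) powr p) \<le> Yb powr p * C1" for N
  proof (rule tendsto_le[OF trivial_limit_sequentially tendsto_const])
    show "(\<lambda>K. \<Sum>n<N. norm (\<Sum>k<K. g n k * y k) powr p) \<longlonglongrightarrow> (\<Sum>n<N. norm (\<Sum>k. g n k * y k) powr p)"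
      by (intro tendsto_sum tendsto_powr' tendsto_norm summable_LIMSEQ rs tendsto_const) (use p0 in auto)
    show "\<forall>\<^sub>F K in sequentially. (\<Sum>n<N. norm (\<Sum>k<K. g n k * y k) powr p) \<le> Yb powr p * C1"
      using fin by simp
  qed
  show ?thesis by (rule summableI_nonneg_bounded[OF _ lim]) simp
qed

definition ccf :: "real \<Rightarrow> (nat \<Rightarrow> real) \<Rightarrow> (nat \<Rightarrow> nat \<Rightarrow> complex) \<Rightarrow> nat \<Rightarrow> nat \<Rightarrow> complex" where
  "ccf r lam a n k = (1 / of_real r) * (of_real (lam k) / of_real (lam k - lam_prev lam k)) * a n k"

definition Emat :: "real \<Rightarrow> real \<Rightarrow> real \<Rightarrow> (nat \<Rightarrow> real) \<Rightarrow> (nat \<Rightarrow> nat \<Rightarrow> complex) \<Rightarrow> nat \<Rightarrow> nat \<Rightarrow> nat \<Rightarrow> complex" where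
  "Emat r s t lam a n m k = (if k < m then ghat_m r s t lam a n k m else if k = m then ccf r lam a n m else 0)"

lemma Esum: "(\<Sum>k\<le>m. Emat r s t lam a n m k * y k) = (\<Sum>k<m. ghat_m r s t lam a n k m * y k) + ccf r lam a n m * y m"
  by (simp add: lessThan_Suc_atMost[symmetric] Emat_def)

lemma Enorm: "(\<Sum>k\<le>m. norm (Emat r s t lam a n m k)) = (\<Sum>k<m. norm (ghat_m r s t lam a n k m)) + norm (ccf r lam a n m)"
  by (simp add: lessThan_Suc_atMost[symmetric] Emat_def)

lemma partial_tendsto:
  fixes f :: "nat \<Rightarrow> complex"
  assumes "summable (\<lambda>i. f (i + k))"
  shows "(\<lambda>m. \<Sum>j = k..m. f j) \<longlonglongrightarrow> (\<Sum>i. f (i + k))"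
proof (rule LIMSEQ_offset[where k=k])
  have "(\<lambda>N. \<Sum>i<N. f (i + k)) \<longlonglongrightarrow> (\<Sum>i. f (i + k))" by (rule summable_LIMSEQ[OF assms])
  hence "(\<lambda>m. \<Sum>i<Suc m. f (i + k)) \<longlonglongrightarrow> (\<Sum>i. f (i + k))" by (rule LIMSEQ_Suc)
  moreover have "(\<Sum>j = k..m + k. f j) = (\<Sum>i<Suc m. f (i + k))" for m
  proof -
    have "(\<Sum>j = 0 + k..m + k. f j) = (\<Sum>i = 0..m. f (i + k))" by (rule sum.shift_bounds_cl_nat_ivl)
    thus ?thesis by (simp add: atLeast0AtMost lessThan_Suc_atMost)
  qed
  ultimately show "(\<lambda>m. \<Sum>j = k..m + k. f j) \<longlonglongrightarrow> (\<Sum>i. f (i + k))" by simp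
qed

lemma col_tendsto:
  assumes B: "\<forall>k n. summable (\<lambda>i. dmat r s t (i + k) k * a n (i + k))"
  shows "(\<lambda>m. Emat r s t lam a n m k) \<longlonglongrightarrow> ghat r s t lam a n k"
proof -
  have ev: "\<forall>\<^sub>F m in sequentially. Emat r s t lam a n m k = ghat_m r s t lam a n k m"
    by (rule eventually_sequentiallyI[of "Suc k"]) (simp add: Emat_def)
  have t1: "(\<lambda>m. \<Sum>j = k..m. dmat r s t j k * a n j) \<longlonglongrightarrow> (\<Sum>i. dmat r s t (i + k) k * a n (i + k))"
    by (rule partial_tendsto[where f="\<lambda>j. dmat r s t j k * a n j"]) (use B in blast)
  have t2: "(\<lambda>m. \<Sum>j = Suc k..m. dmat r s t j (Suc k) * a n j) \<longlonglongrightarrow> (\<Sum>i. dmat r s t (i + Suc k) (Suc k) * a n (i + Suc k))"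
    by (rule partial_tendsto[where f="\<lambda>j. dmat r s t j (Suc k) * a n j"]) (use B in blast)
  have "(\<lambda>m. ghat_m r s t lam a n k m) \<longlonglongrightarrow> ghat r s t lam a n k"
    unfolding ghat_m_def ghat_def by (intro tendsto_intros t1 t2)
  thus ?thesis using tendsto_cong[OF ev] by simp
qed

lemma X_char:
  assumes r: "r \<noteq> 0" and lm: "strict_mono lam" "\<forall>k. 0 < lam k"
  shows "x \<in> c0_lam_B r s t lam \<longleftrightarrow> (\<exists>y. y \<longlonglongrightarrow> 0 \<and> x = Phi r s t lam y)"
proof
  assume "x \<in> c0_lam_B r s t lam"
  thus "\<exists>y. y \<longlonglongrightarrow> 0 \<and> x = Phi r s t lam y"
    using Phi_What[OF r lm, of s t x] by (auto simp: c0_lam_B_def)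
next
  assume "\<exists>y. y \<longlonglongrightarrow> 0 \<and> x = Phi r s t lam y"
  thus "x \<in> c0_lam_B r s t lam" using What_Phi[OF r lm] by (auto simp: c0_lam_B_def)
qed

lemma ps_E:
  assumes r: "r \<noteq> 0" and lm: "strict_mono lam" "\<forall>k. 0 < lam k"
  shows "(\<Sum>j\<le>m. a n j * Phi r s t lam y j) = (\<Sum>k\<le>m. Emat r s t lam a n m k * y k)"
  by (simp only: Esum ps_ident[OF r lm] ccf_def)

lemma ey_c0:
  assumes lm: "\<forall>k. 0 < lam k" and lt: "filterlim lam at_top sequentially"
  shows "ey lam k \<longlonglongrightarrow> 0"
proof -
  have "(\<lambda>n. dl lam k / lam n) \<longlonglongrightarrow> 0"
    by (rule tendsto_divide_0[OF tendsto_const filterlim_at_top_imp_at_infinity[OF lt]])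
  hence "(\<lambda>n. of_real (dl lam k / lam n) :: complex) \<longlonglongrightarrow> of_real 0"
    by (rule tendsto_of_real)
  hence "(\<lambda>n. of_real (dl lam k / lam n) :: complex) \<longlonglongrightarrow> 0" by simp
  moreover have ev: "\<forall>\<^sub>F n in sequentially. ey lam k n = of_real (dl lam k / lam n)"
    by (rule eventually_sequentiallyI[of k]) (simp add: ey_def)
  ultimately show ?thesis using tendsto_cong[OF ev] by blast
qed

lemma core_nec:
  assumes r: "r \<noteq> 0" and lm: "strict_mono lam" "\<forall>k. 0 < lam k" and lt: "filterlim lam at_top sequentially"
  and S: "\<forall>x\<in>c0_lam_B r s t lam. \<forall>n. summable (\<lambda>k. a n k * x k)"
  shows "(\<forall>k n. summable (\<lambda>i. dmat r s t (i + k) k * a n (i + k))) \<and>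
    (\<forall>n. bdd_above (range (\<lambda>m. \<Sum>k<m. norm (ghat_m r s t lam a n k m)))) \<and>
    (\<forall>n. bdd_above (range (\<lambda>k. norm ((1 / of_real r) *
             (of_real (lam k) / of_real (lam k - lam_prev lam k)) * a n k))))"
proof (intro conjI allI)
  fix k n
  have "Phi r s t lam (ey lam k) \<in> c0_lam_B r s t lam"
    using X_char[OF r lm] ey_c0[OF lm(2) lt] by blast
  hence "summable (\<lambda>j. a n j * Phi r s t lam (ey lam k) j)" using S by blast
  hence "summable (\<lambda>j. dmat r s t j k * a n j)" by (simp add: Phi_ey[OF r lm] mult.commute)
  thus "summable (\<lambda>i. dmat r s t (i + k) k * a n (i + k))"
    using summable_iff_shift[of "\<lambda>j. dmat r s t j k * a n j" k] by simp
next
  fix n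
  have "\<exists>M. \<forall>m. (\<Sum>k\<le>m. norm (Emat r s t lam a n m k)) \<le> M"
  proof (rule c0c_nec)
    fix y :: "nat \<Rightarrow> complex" assume "y \<longlonglongrightarrow> 0"
    hence "Phi r s t lam y \<in> c0_lam_B r s t lam" using X_char[OF r lm] by blast
    hence "summable (\<lambda>j. a n j * Phi r s t lam y j)" using S by blast
    hence "convergent (\<lambda>m. \<Sum>j\<le>m. a n j * Phi r s t lam y j)" by (simp add: summable_iff_convergent')
    thus "convergent (\<lambda>m. \<Sum>k\<le>m. Emat r s t lam a n m k * y k)" by (simp add: ps_E[OF r lm])
  qed
  then obtain M where M: "\<And>m. (\<Sum>k<m. norm (ghat_m r s t lam a n k m)) + norm (ccf r lam a n m) \<le> M"
    by (auto simp: Enorm)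
  show "bdd_above (range (\<lambda>m. \<Sum>k<m. norm (ghat_m r s t lam a n k m)))"
  proof (rule bdd_aboveI2)
    fix m show "(\<Sum>k<m. norm (ghat_m r s t lam a n k m)) \<le> M"
      using M[of m] norm_ge_zero[of "ccf r lam a n m"] by linarith
  qed
  show "bdd_above (range (\<lambda>k. norm ((1 / of_real r) * (of_real (lam k) / of_real (lam k - lam_prev lam k)) * a n k)))"
  proof (rule bdd_aboveI2)
    fix k
    have "norm (ccf r lam a n k) \<le> M"
      using M[of k] sum_nonneg[of "{..<k}" "\<lambda>j. norm (ghat_m r s t lam a n j k)"] by simp
    thus "norm ((1 / of_real r) * (of_real (lam k) / of_real (lam k - lam_prev lam k)) * a n k) \<le> M"
      unfolding ccf_def .
  qed
qed

lemma core_suff: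
  assumes r: "r \<noteq> 0" and lm: "strict_mono lam" "\<forall>k. 0 < lam k"
  and B: "\<forall>k n. summable (\<lambda>i. dmat r s t (i + k) k * a n (i + k))"
  and C: "\<forall>n. bdd_above (range (\<lambda>m. \<Sum>k<m. norm (ghat_m r s t lam a n k m)))"
  and D: "\<forall>n. bdd_above (range (\<lambda>k. norm ((1 / of_real r) *
             (of_real (lam k) / of_real (lam k - lam_prev lam k)) * a n k)))"
  shows "summable (\<lambda>k. norm (ghat r s t lam a n k))"
    and "y \<longlonglongrightarrow> 0 \<Longrightarrow> summable (\<lambda>j. a n j * Phi r s t lam y j) \<and>
          (\<Sum>j. a n j * Phi r s t lam y j) = (\<Sum>k. ghat r s t lam a n k * y k)"
proof -
  obtain M1 where M1: "\<And>m. (\<Sum>k<m. norm (ghat_m r s t lam a n k m)) \<le> M1"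
    using C by (auto simp: bdd_above_def)
  obtain M2 where M2: "\<And>m. norm (ccf r lam a n m) \<le> M2"
    using D by (auto simp: bdd_above_def ccf_def)
  have bnd: "(\<Sum>k\<le>m. norm (Emat r s t lam a n m k)) \<le> M1 + M2" for m
    unfolding Enorm using M1[of m] M2[of m] by simp
  note cs = c0c_suff[OF col_tendsto[OF B] bnd]
  show "summable (\<lambda>k. norm (ghat r s t lam a n k))" by (rule cs(1))
  assume y0: "y \<longlonglongrightarrow> 0"
  have "(\<lambda>m. \<Sum>j\<le>m. a n j * Phi r s t lam y j) \<longlonglongrightarrow> (\<Sum>k. ghat r s t lam a n k * y k)"
    using cs(3)[OF y0] by (simp add: ps_E[OF r lm])
  thus "summable (\<lambda>j. a n j * Phi r s t lam y j) \<and>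
          (\<Sum>j. a n j * Phi r s t lam y j) = (\<Sum>k. ghat r s t lam a n k * y k)"
    unfolding sums_iff[symmetric] sums_def_le .
qed

theorem theorem13:
  fixes r s t p :: real and lam :: "nat \<Rightarrow> real" and a :: "nat \<Rightarrow> nat \<Rightarrow> complex"
  assumes "r \<noteq> 0" "s \<noteq> 0" "t \<noteq> 0"
    and "strict_mono lam" "\<forall>k. 0 < lam k" "filterlim lam at_top sequentially"
    and "1 < p"
  shows
   "(matrix_class a (c0_lam_B r s t lam) (ell_p p) \<longleftrightarrow>
      (\<exists>M. \<forall>F. finite F \<longrightarrow>
          summable (\<lambda>n. norm (\<Sum>k\<in>F. ghat r s t lam a n k) powr p) \<and>
          (\<Sum>n. norm (\<Sum>k\<in>F. ghat r s t lam a n k) powr p) \<le> M) \<and>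
      (\<forall>k n. summable (\<lambda>i. dmat r s t (i + k) k * a n (i + k))) \<and>
      (\<forall>n. bdd_above (range (\<lambda>m. \<Sum>k<m. norm (ghat_m r s t lam a n k m)))) \<and>
      (\<forall>n. bdd_above (range (\<lambda>k. norm ((1 / of_real r) *
             (of_real (lam k) / of_real (lam k - lam_prev lam k)) * a n k)))))
    \<and>
    (matrix_class a (c0_lam_B r s t lam) ell_inf \<longleftrightarrow>
      (\<forall>k n. summable (\<lambda>i. dmat r s t (i + k) k * a n (i + k))) \<and>
      (\<forall>n. bdd_above (range (\<lambda>m. \<Sum>k<m. norm (ghat_m r s t lam a n k m)))) \<and>
      (\<forall>n. bdd_above (range (\<lambda>k. norm ((1 / of_real r) *
             (of_real (lam k) / of_real (lam k - lam_prev lam k)) * a n k)))) \<and>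
      (\<exists>M. \<forall>n. summable (\<lambda>k. norm (ghat r s t lam a n k)) \<and>
          (\<Sum>k. norm (ghat r s t lam a n k)) \<le> M))"
proof -
  note r = assms(1) and lm = assms(4,5) and lt = assms(6) and p = assms(7)
  define X where "X = c0_lam_B r s t lam"
  define BB where "BB = (\<forall>k n. summable (\<lambda>i. dmat r s t (i + k) k * a n (i + k)))"
  define CC where "CC = (\<forall>n. bdd_above (range (\<lambda>m. \<Sum>k<m. norm (ghat_m r s t lam a n k m))))"
  define DD where "DD = (\<forall>n. bdd_above (range (\<lambda>k. norm ((1 / of_real r) *
             (of_real (lam k) / of_real (lam k - lam_prev lam k)) * a n k))))"
  have p0: "p > 0" using p by simp
  have nec: "BB \<and> CC \<and> DD" if "\<forall>x\<in>X. \<forall>n. summable (\<lambda>k. a n k * x k)"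
    using core_nec[OF r lm lt, where s=s and t=t and a=a] that by (simp add: X_def BB_def CC_def DD_def)
  have rows: "summable (\<lambda>k. norm (ghat r s t lam a n k))" if "BB" "CC" "DD" for n
    using core_suff(1)[OF r lm, where s=s and t=t and a=a and n=n] that by (simp add: BB_def CC_def DD_def)
  have rep: "(\<forall>n. summable (\<lambda>j. a n j * Phi r s t lam y j)) \<and>
      (\<lambda>n. \<Sum>j. a n j * Phi r s t lam y j) = (\<lambda>n. \<Sum>k. ghat r s t lam a n k * y k)"
    if "BB" "CC" "DD" "y \<longlonglongrightarrow> 0" for y
  proof -
    have "summable (\<lambda>j. a n j * Phi r s t lam y j) \<and>
          (\<Sum>j. a n j * Phi r s t lam y j) = (\<Sum>k. ghat r s t lam a n k * y k)" for n
      using core_suff(2)[OF r lm, where s=s and t=t and a=a and n=n and y=y] that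
      by (simp add: BB_def CC_def DD_def)
    thus ?thesis by auto
  qed
  have Xc: "x \<in> X \<longleftrightarrow> (\<exists>y. y \<longlonglongrightarrow> 0 \<and> x = Phi r s t lam y)" for x
    unfolding X_def by (rule X_char[OF r lm])
  have PhiX: "Phi r s t lam y \<in> X" if "y \<longlonglongrightarrow> 0" for y using Xc that by blast
  have part1: "matrix_class a X (ell_p p) \<longleftrightarrow>
      (\<exists>M. \<forall>F. finite F \<longrightarrow>
          summable (\<lambda>n. norm (\<Sum>k\<in>F. ghat r s t lam a n k) powr p) \<and>
          (\<Sum>n. norm (\<Sum>k\<in>F. ghat r s t lam a n k) powr p) \<le> M) \<and> BB \<and> CC \<and> DD"
  proof
    assume mc: "matrix_class a X (ell_p p)"
    hence S: "\<forall>x\<in>X. \<forall>n. summable (\<lambda>k. a n k * x k)" by (simp add: matrix_class_def)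
    have bcd: "BB" "CC" "DD" using nec[OF S] by auto
    have "\<exists>B. \<forall>F. finite F \<longrightarrow> summable (\<lambda>n. norm (\<Sum>k\<in>F. ghat r s t lam a n k) powr p) \<and>
            (\<Sum>n. norm (\<Sum>k\<in>F. ghat r s t lam a n k) powr p) \<le> B"
    proof (rule UBp[OF p0 rows[OF bcd]])
      fix y :: "nat \<Rightarrow> complex" assume y0: "y \<longlonglongrightarrow> 0"
      have "(\<lambda>n. \<Sum>j. a n j * Phi r s t lam y j) \<in> ell_p p"
        using mc PhiX[OF y0] by (simp add: matrix_class_def)
      thus "summable (\<lambda>n. norm (\<Sum>k. ghat r s t lam a n k * y k) powr p)"
        using rep[OF bcd y0] by (simp add: ell_p_def)
    qed
    thus "(\<exists>M. \<forall>F. finite F \<longrightarrow>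
          summable (\<lambda>n. norm (\<Sum>k\<in>F. ghat r s t lam a n k) powr p) \<and>
          (\<Sum>n. norm (\<Sum>k\<in>F. ghat r s t lam a n k) powr p) \<le> M) \<and> BB \<and> CC \<and> DD"
      using bcd by blast
  next
    assume H: "(\<exists>M. \<forall>F. finite F \<longrightarrow>
          summable (\<lambda>n. norm (\<Sum>k\<in>F. ghat r s t lam a n k) powr p) \<and>
          (\<Sum>n. norm (\<Sum>k\<in>F. ghat r s t lam a n k) powr p) \<le> M) \<and> BB \<and> CC \<and> DD"
    then obtain M where M: "\<And>F. finite F \<Longrightarrow>
          summable (\<lambda>n. norm (\<Sum>k\<in>F. ghat r s t lam a n k) powr p) \<and>
          (\<Sum>n. norm (\<Sum>k\<in>F. ghat r s t lam a n k) powr p) \<le> M" by blast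
    have bcd: "BB" "CC" "DD" using H by auto
    show "matrix_class a X (ell_p p)"
      unfolding matrix_class_def
    proof
      fix x assume "x \<in> X"
      then obtain y where y0: "y \<longlonglongrightarrow> 0" and x: "x = Phi r s t lam y" using Xc by blast
      have "summable (\<lambda>n. norm (\<Sum>k. ghat r s t lam a n k * y k) powr p)"
        by (rule lp_suff[OF less_imp_le[OF p] rows[OF bcd] M y0])
      thus "(\<forall>n. summable (\<lambda>k. a n k * x k)) \<and> (\<lambda>n. \<Sum>k. a n k * x k) \<in> ell_p p"
        using rep[OF bcd y0] by (simp add: x ell_p_def)
    qed
  qed
  have part2: "matrix_class a X ell_inf \<longleftrightarrow> BB \<and> CC \<and> DD \<and>
      (\<exists>M. \<forall>n. summable (\<lambda>k. norm (ghat r s t lam a n k)) \<and>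
          (\<Sum>k. norm (ghat r s t lam a n k)) \<le> M)"
  proof
    assume mc: "matrix_class a X ell_inf"
    hence S: "\<forall>x\<in>X. \<forall>n. summable (\<lambda>k. a n k * x k)" by (simp add: matrix_class_def)
    have bcd: "BB" "CC" "DD" using nec[OF S] by auto
    have "\<exists>B. \<forall>n. (\<Sum>k. norm (ghat r s t lam a n k)) \<le> B"
    proof (rule UB1[OF rows[OF bcd]])
      fix y :: "nat \<Rightarrow> complex" assume y0: "y \<longlonglongrightarrow> 0"
      have "(\<lambda>n. \<Sum>j. a n j * Phi r s t lam y j) \<in> ell_inf"
        using mc PhiX[OF y0] by (simp add: matrix_class_def)
      thus "bdd_above (range (\<lambda>n. norm (\<Sum>k. ghat r s t lam a n k * y k)))"
        using rep[OF bcd y0] by (simp add: ell_inf_def)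
    qed
    thus "BB \<and> CC \<and> DD \<and> (\<exists>M. \<forall>n. summable (\<lambda>k. norm (ghat r s t lam a n k)) \<and>
          (\<Sum>k. norm (ghat r s t lam a n k)) \<le> M)"
      using bcd rows[OF bcd] by blast
  next
    assume H: "BB \<and> CC \<and> DD \<and> (\<exists>M. \<forall>n. summable (\<lambda>k. norm (ghat r s t lam a n k)) \<and>
          (\<Sum>k. norm (ghat r s t lam a n k)) \<le> M)"
    then obtain M where M: "\<And>n. (\<Sum>k. norm (ghat r s t lam a n k)) \<le> M" by blast
    have bcd: "BB" "CC" "DD" using H by auto
    show "matrix_class a X ell_inf"
      unfolding matrix_class_def
    proof
      fix x assume "x \<in> X"
      then obtain y where y0: "y \<longlonglongrightarrow> 0" and x: "x = Phi r s t lam y" using Xc by blast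
      obtain Yb where Yb: "Yb > 0" "\<And>k. norm (y k) \<le> Yb"
        using convergent_imp_Bseq[of y] y0 by (auto simp: convergent_def Bseq_def)
      have bd: "norm (\<Sum>k. ghat r s t lam a n k * y k) \<le> M * Yb" for n
      proof -
        have gs: "summable (\<lambda>k. norm (ghat r s t lam a n k))" by (rule rows[OF bcd])
        have s1: "summable (\<lambda>k. norm (ghat r s t lam a n k) * Yb)" by (rule summable_mult2[OF gs])
        have le: "norm (ghat r s t lam a n k * y k) \<le> norm (ghat r s t lam a n k) * Yb" for k
          unfolding norm_mult by (rule mult_left_mono[OF Yb(2)]) simp
        have s2: "summable (\<lambda>k. norm (ghat r s t lam a n k * y k))"
          by (rule summable_comparison_test[OF _ s1]) (use le in auto)
        have "norm (\<Sum>k. ghat r s t lam a n k * y k) \<le> (\<Sum>k. norm (ghat r s t lam a n k * y k))"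
          by (rule summable_norm[OF s2])
        also have "\<dots> \<le> (\<Sum>k. norm (ghat r s t lam a n k) * Yb)" by (rule suminf_le[OF le s2 s1])
        also have "\<dots> = (\<Sum>k. norm (ghat r s t lam a n k)) * Yb" by (rule suminf_mult2[symmetric, OF gs])
        also have "\<dots> \<le> M * Yb" using M[of n] Yb by (intro mult_right_mono) auto
        finally show ?thesis .
      qed
      hence "bdd_above (range (\<lambda>n. norm (\<Sum>k. ghat r s t lam a n k * y k)))"
        by (intro bdd_aboveI2) auto
      thus "(\<forall>n. summable (\<lambda>k. a n k * x k)) \<and> (\<lambda>n. \<Sum>k. a n k * x k) \<in> ell_inf"
        using rep[OF bcd y0] by (simp add: x ell_inf_def)
    qed
  qed
  show ?thesis using part1 part2 by (simp add: X_def BB_def CC_def DD_def)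
qed

end
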